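(* Let $X$ and $Y$ be real Hilbert spaces and let $I$ be either $[0,T]$ with $T>0$ or $\mathbb{R}_+=[0,+\infty)$. Assume: (K) $K\subset X$ is a nonempty closed convex cone. (A) $A:X\to X$ satisfies, for some constants $m_A>0$, $L_A>0$: $(Au-Av,u-v)_X\ge m_A\|u-v\|_X^2$ and $\|Au-Av\|_X\le L_A\|u-v\|_X$ for all $u,v\in X$. (R) $\mathcal{R}:C(I;X)\to C(I;Y)$ and for every compact set $\mathcal{J}\subset I$ there exist $l^{\mathcal R}_{\mathcal J}>0$, $L^{\mathcal R}_{\mathcal J}>0$ with $\|\mathcal{R}u_1(t)-\mathcal{R}u_2(t)\|_Y\le l^{\mathcal R}_{\mathcal J}\|u_1(t)-u_2(t)\|_X+L^{\mathcal R}_{\mathcal J}\int_0^t\|u_1(s)-u_2(s)\|_X\,ds$ for all $u_1,u_2\in C(I;X)$, $t\in\mathcal J$. (S) $\mathcal{S}:C(I;X)\to C(I;X)$ and for every compact set $\mathcal{J}\subset I$ there exist $l^{\mathcal S}_{\mathcal J}>0$, $L^{\mathcal S}_{\mathcal J}>0$ with $\|\mathcal{S}u_1(t)-\mathcal{S}u_2(t)\|_X\le l^{\mathcal S}_{\mathcal J}\|u_1(t)-u_2(t)\|_X+L^{\mathcal S}_{\mathcal J}\int_0^t\|u_1(s)-u_2(s)\|_X\,ds$ for all $u_1,u_2\in C(I;X)$, $t\in\mathcal J$. (j) $j:Y\times K\to\mathbb{R}$ is such that (a) for every $\eta\in Y$, $j(\eta,\cdot):K\to\mathbb{R}$ is convex,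 positively homogeneous and Lipschitz continuous; (b) there is $\alpha_j\ge 0$ with $j(\eta_1,v_2)-j(\eta_1,v_1)+j(\eta_2,v_1)-j(\eta_2,v_2)\le\alpha_j\|\eta_1-\eta_2\|_Y\|v_1-v_2\|_X$ for all $\eta_1,\eta_2\in Y$, $v_1,v_2\in K$. (f) $f\in C(I;X)$. Assume moreover that for every compact set $\mathcal J\subset I$, $(\alpha_j+1)(l^{\mathcal R}_{\mathcal J}+l^{\mathcal S}_{\mathcal J})<m_A$. Then there exists a unique function $u:I\to X$ such that $$-u(t)\in \mathrm{N}_{C(\mathcal{R}u(t),t)}\big(Au(t)+\mathcal{S}u(t)\big)\quad\forall\,t\in I,$$ and this solution satisfies $u\in C(I;K)$.
   Context: $C(I;Z)$ denotes the space of continuous functions $I\to Z$, and $\mathcal{R}u(t)$ means $(\mathcal{R}u)(t)$. For a nonempty closed convex set $D\subset X$, the normal cone is $\mathrm{N}_D(x)=\{\xi\in X:(\xi,v-x)_X\le 0\ \forall v\in D\}$ if $x\in D$ and $\mathrm{N}_D(x)=\emptyset$ if $x\notin D$. Given $j$, define $J:Y\times X\to(-\infty,+\infty]$ by $J(\eta,v)=j(\eta,v)$ if $v\in K$ and $J(\eta,v)=+\infty$ if $v\notin K$; set $C(\eta)=\{\xi\in X: J(\eta,v)\ge(\xi,v)_X\ \forall v\in X\}$ (the convex subdifferential of $J(\eta,\cdot)$ at $0_X$) and $C(\eta,t)=f(t)-C(\eta)$ for $\eta\in Y$, $t\in I$. *)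

theory Defs
  imports "HOL-Analysis.Analysis"
begin

definition normal_cone :: "'a::real_inner set \<Rightarrow> 'a \<Rightarrow> 'a set" where
  "normal_cone D x = (if x \<in> D then {\<xi>. \<forall>v\<in>D. inner \<xi> (v - x) \<le> 0} else {})"

definition Jext :: "'x set \<Rightarrow> ('y \<Rightarrow> 'x \<Rightarrow> real) \<Rightarrow> 'y \<Rightarrow> 'x \<Rightarrow> ereal" where
  "Jext K j \<eta> v = (if v \<in> K then ereal (j \<eta> v) else \<infinity>)"

text \<open>C(eta): convex subdifferential of J(eta,.) at 0.\<close>
definition Cset :: "'x::real_inner set \<Rightarrow> ('y \<Rightarrow> 'x \<Rightarrow> real) \<Rightarrow> 'y \<Rightarrow> 'x set" where
  "Cset K j \<eta> = {\<xi>. \<forall>v. Jext K j \<eta> v \<ge> ereal (inner \<xi> v)}"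

definition Cset_t :: "'x::real_inner set \<Rightarrow> ('y \<Rightarrow> 'x \<Rightarrow> real) \<Rightarrow> (real \<Rightarrow> 'x) \<Rightarrow> 'y \<Rightarrow> real \<Rightarrow> 'x set" where
  "Cset_t K j f \<eta> t = (\<lambda>\<xi>. f t - \<xi>) ` Cset K j \<eta>"

end

theory Submission
  imports Defs
begin

lemma parallelo_mid:
  fixes x y h :: "'x::real_inner"
  shows "(norm ((1/2) *\<^sub>R (x + y) - h))^2 = (norm (x - h))^2/2 + (norm (y - h))^2/2 - (norm (x - y))^2/4"
proof -
  have "(1/2) *\<^sub>R (x + y) - h = (1/2) *\<^sub>R ((x - h) + (y - h))" by (simp add: algebra_simps flip: scaleR_add_left)
  then have "(norm ((1/2) *\<^sub>R (x + y) - h))^2 = (1/4) * (norm ((x - h) + (y - h)))^2"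
    by (simp add: power2_eq_square)
  moreover have "x - y = (x - h) - (y - h)" by simp
  moreover have "(norm ((x - h) + (y - h)))^2 + (norm ((x - h) - (y - h)))^2 = 2 * (norm (x - h))^2 + 2 * (norm (y - h))^2"
    by (simp add: power2_norm_eq_inner inner_add_left inner_add_right inner_diff_left inner_diff_right inner_commute)
  ultimately show ?thesis by (simp add: algebra_simps)
qed

lemma sq_expand0:
  fixes a b :: "'x::real_inner"
  shows "(norm (a + t *\<^sub>R b))^2 = (norm a)^2 + 2 * t * inner a b + t^2 * (norm b)^2"
  unfolding power2_norm_eq_inner by (simp add: inner_add_left inner_add_right inner_commute power2_eq_square algebra_simps)

lemma sq_expand:
  fixes p v h :: "'x::real_inner"
  shows "(norm (p + t *\<^sub>R (v - p) - h))^2 = (norm (p - h))^2 + 2 * t * inner (p - h) (v - p) + t^2 * (norm (v - p))^2"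
proof -
  have eq: "p + t *\<^sub>R (v - p) - h = (p - h) + t *\<^sub>R (v - p)" by (simp add: algebra_simps)
  show ?thesis unfolding eq by (rule sq_expand0)
qed

lemma small_t:
  fixes a b :: real
  assumes "b \<ge> 0" "\<And>t. 0 < t \<Longrightarrow> t \<le> 1 \<Longrightarrow> 0 \<le> t * a + t^2 * b"
  shows "0 \<le> a"
proof (rule ccontr)
  assume "\<not> 0 \<le> a"
  define t where "t = min 1 (- a / (2 * (b + 1)))"
  have t: "0 < t" "t \<le> 1" using \<open>\<not> 0 \<le> a\<close> assms(1) by (auto simp: t_def divide_neg_pos)
  have "t * b < - a"
  proof -
    have "t \<le> - a / (2 * (b + 1))" by (simp add: t_def)
    then have "t * b \<le> (- a / (2 * (b + 1))) * b" using assms(1) by (intro mult_right_mono) auto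
    also have "\<dots> < - a" using \<open>\<not> 0 \<le> a\<close> assms(1) by (simp add: field_simps) (smt (verit) mult_nonpos_nonneg)
    finally show ?thesis .
  qed
  then have "t * (a + t * b) < 0" using t by (simp add: mult_pos_neg)
  moreover have "t * (a + t*b) = t * a + t^2 * b" by (simp add: algebra_simps power2_eq_square)
  ultimately show False using assms(2)[OF t] by linarith
qed
lemma fa1: fixes P N0 X t I n V :: real
 assumes "P + N0/2 \<le> X + (N0 + 2*t*I + t^2*n)/2" "X \<le> (1-t)*P + t*V"
 shows "0 \<le> t*(I + V - P) + t^2*(n/2)"
 using assms by (simp add: field_simps)

lemma half_le: fixes a b c :: real assumes "a \<le> c" "b \<le> c" shows "(a + b)/2 \<le> c"
  using assms by (simp add: field_simps)

lemma half_lt: fixes x y m a b :: real assumes "x < m + a" "y < m + b" shows "(x + y)/2 - m < (a + b)/2"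
  using assms by (simp add: field_simps)

lemma prox_exists:
  fixes K :: "'x::{real_inner,complete_space} set" and \<phi> :: "'x \<Rightarrow> real"
  assumes K: "K \<noteq> {}" "closed K" "convex K"
    and cv: "convex_on K \<phi>"
    and lip: "\<forall>v\<in>K. \<forall>w\<in>K. \<bar>\<phi> v - \<phi> w\<bar> \<le> L * norm (v - w)"
  shows "\<exists>p\<in>K. \<forall>v\<in>K. 0 \<le> inner (p - h) (v - p) + \<phi> v - \<phi> p"
proof -
  define \<Phi> where "\<Phi> v = \<phi> v + (norm (v - h))^2 / 2" for v
  obtain k0 where k0: "k0 \<in> K" using K by auto
  define L' where "L' = \<bar>L\<bar>"
  have L'0: "L' \<ge> 0" by (simp add: L'_def)
  have lip': "\<bar>\<phi> v - \<phi> w\<bar> \<le> L' * norm (v - w)" if "v\<in>K" "w\<in>K" for v w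
  proof -
    have "\<bar>\<phi> v - \<phi> w\<bar> \<le> L * norm (v - w)" using lip that by blast
    also have "\<dots> \<le> L' * norm (v - w)" unfolding L'_def by (intro mult_right_mono) auto
    finally show ?thesis .
  qed
  have lb: "\<Phi> v \<ge> \<phi> k0 - L' * norm (h - k0) - L'^2/2" if "v \<in> K" for v
  proof -
    have 1: "\<phi> v \<ge> \<phi> k0 - L' * norm (v - k0)" using lip'[OF that k0] by linarith
    have "norm (v - k0) \<le> norm (v - h) + norm (h - k0)"
      using norm_triangle_ineq[of "v - h" "h - k0"] by simp
    then have 2: "L' * norm (v - k0) \<le> L' * norm (v - h) + L' * norm (h - k0)"
      using L'0 by (metis distrib_left mult_left_mono)
    have 3: "L' * norm (v - h) \<le> (norm (v-h))^2/2 + L'^2/2"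
      using sum_squares_ge_zero[of 0 "norm (v - h) - L'"] by (simp add: power2_eq_square algebra_simps)
    show ?thesis using 1 2 3 unfolding \<Phi>_def by linarith
  qed
  define m where "m = Inf (\<Phi> ` K)"
  have bdd: "bdd_below (\<Phi> ` K)" using lb by (intro bdd_belowI2) auto
  have m_le: "m \<le> \<Phi> v" if "v\<in>K" for v unfolding m_def using bdd that by (simp add: cInf_lower)
  have "\<exists>a\<in>K. \<Phi> a < m + 1/Suc n" for n
  proof -
    have "Inf (\<Phi> ` K) < m + 1/Suc n" unfolding m_def by simp
    moreover have "\<Phi> ` K \<noteq> {}" using K by simp
    ultimately obtain y where "y \<in> \<Phi> ` K" "y < m + 1/Suc n" by (meson cInf_lessD)
    then show ?thesis by blast
  qed
  then obtain a where aK: "\<And>n. a n \<in> K" and aP: "\<And>n. \<Phi> (a n) < m + 1/Suc n" by metis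
  have mid: "(norm (x - y))^2 / 8 \<le> (\<Phi> x + \<Phi> y)/2 - m" if "x\<in>K" "y\<in>K" for x y
  proof -
    have mK: "(1/2) *\<^sub>R (x + y) \<in> K"
      using convexD[OF K(3) that, of "1/2" "1/2"] by (simp add: scaleR_add_right)
    have "\<phi> ((1/2) *\<^sub>R (x + y)) \<le> (1/2) * \<phi> x + (1/2) * \<phi> y"
      using convex_onD[OF cv, of "1/2" x y] that by (simp add: scaleR_add_right)
    then have "\<Phi> ((1/2) *\<^sub>R (x + y)) \<le> (\<Phi> x + \<Phi> y)/2 - (norm (x - y))^2 / 8"
      unfolding \<Phi>_def parallelo_mid by (simp add: field_simps)
    then show ?thesis using m_le[OF mK] by linarith
  qed
  have cauchy: "Cauchy a"
  proof (rule metric_CauchyI)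
    fix e :: real assume e: "e > 0"
    obtain N :: nat where N: "8 / e^2 < N" using reals_Archimedean2 by blast
    have "dist (a i) (a k) < e" if "i \<ge> N" "k \<ge> N" for i k
    proof -
      have "(norm (a i - a k))^2 / 8 \<le> (\<Phi> (a i) + \<Phi> (a k))/2 - m" using mid aK by blast
      also have "\<dots> < (1/Suc i + 1/Suc k)/2" using half_lt[OF aP[of i] aP[of k]] .
      also have "\<dots> \<le> 1/Suc N"
      proof -
        have "1/real (Suc i) \<le> 1/Suc N" "1/real (Suc k) \<le> 1/Suc N"
          using that by (simp_all add: frac_le)
        then show ?thesis by (rule half_le)
      qed
      finally have "(norm (a i - a k))^2 < 8 / Suc N" by (simp add: field_simps)
      also have "\<dots> < e^2"
      proof -
        have "8 / e^2 < Suc N" using N by simp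
        then show ?thesis using e by (simp add: field_simps)
      qed
      finally have "(norm (a i - a k))^2 < e^2" .
      then have "norm (a i - a k) < e" using power2_less_imp_less[OF _ less_imp_le[OF e]] by blast
      then show ?thesis by (simp add: dist_norm)
    qed
    then show "\<exists>M. \<forall>i\<ge>M. \<forall>k\<ge>M. dist (a i) (a k) < e" by blast
  qed
  then obtain p where ap: "a \<longlonglongrightarrow> p" using Cauchy_convergent_iff convergent_def by blast
  have pK: "p \<in> K" using closed_sequentially[OF K(2)] aK ap by blast
  have "(\<lambda>n. \<phi> (a n) - \<phi> p) \<longlonglongrightarrow> 0"
  proof (rule Lim_null_comparison)
    show "\<forall>\<^sub>F n in sequentially. norm (\<phi> (a n) - \<phi> p) \<le> L' * norm (a n - p)"
      using lip' aK pK by auto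
    have "(\<lambda>n. a n - p) \<longlonglongrightarrow> 0" using ap by (simp add: LIM_zero)
    then show "(\<lambda>n. L' * norm (a n - p)) \<longlonglongrightarrow> 0"
      using tendsto_mult_right_zero tendsto_norm_zero by blast
  qed
  then have "(\<lambda>n. \<phi> (a n)) \<longlonglongrightarrow> \<phi> p" by (simp add: LIM_zero_iff)
  moreover have "(\<lambda>n. (norm (a n - h))^2 / 2) \<longlonglongrightarrow> (norm (p - h))^2/2"
    by (intro tendsto_intros ap) auto
  ultimately have t1: "(\<lambda>n. \<Phi> (a n)) \<longlonglongrightarrow> \<Phi> p" unfolding \<Phi>_def by (intro tendsto_add)
  have t2: "(\<lambda>n. \<Phi> (a n)) \<longlonglongrightarrow> m"
  proof (rule tendsto_sandwich[of "\<lambda>_. m" _ _ "\<lambda>n. m + 1/Suc n"])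
    show "\<forall>\<^sub>F n in sequentially. m \<le> \<Phi> (a n)" using m_le aK by auto
    show "\<forall>\<^sub>F n in sequentially. \<Phi> (a n) \<le> m + 1/Suc n" using aP by (simp add: less_imp_le)
    show "(\<lambda>n. m) \<longlonglongrightarrow> m" by simp
    have "(\<lambda>n. 1 / real (Suc n)) \<longlonglongrightarrow> 0" using LIMSEQ_Suc[OF lim_const_over_n[of 1]] by simp
    then show "(\<lambda>n. m + 1/real (Suc n)) \<longlonglongrightarrow> m" using tendsto_add[of "\<lambda>_. m" m sequentially] by fastforce
  qed
  have pm: "\<Phi> p = m" using LIMSEQ_unique[OF t1 t2] .
  have "0 \<le> inner (p - h) (v - p) + \<phi> v - \<phi> p" if vK: "v \<in> K" for v
  proof -
    have key: "0 \<le> t * (inner (p - h) (v - p) + \<phi> v - \<phi> p) + t^2 * ((norm (v - p))^2/2)"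
      if t: "0 < t" "t \<le> 1" for t
    proof -
      have eq: "(1 - t) *\<^sub>R p + t *\<^sub>R v = p + t *\<^sub>R (v - p)" by (simp add: algebra_simps)
      have "(1 - t) *\<^sub>R p + t *\<^sub>R v \<in> K" by (rule convexD[OF K(3) pK vK]) (use t in auto)
      then have xK: "p + t *\<^sub>R (v - p) \<in> K" unfolding eq .
      have "\<phi> ((1 - t) *\<^sub>R p + t *\<^sub>R v) \<le> (1 - t) * \<phi> p + t * \<phi> v"
        by (rule convex_onD[OF cv]) (use t pK vK in auto)
      then have c1: "\<phi> (p + t *\<^sub>R (v - p)) \<le> (1 - t) * \<phi> p + t * \<phi> v" unfolding eq .
      have "\<Phi> p \<le> \<Phi> (p + t *\<^sub>R (v - p))" using m_le[OF xK] pm by linarith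
      then have m1: "\<phi> p + (norm (p - h))^2/2 \<le> \<phi> (p + t *\<^sub>R (v - p)) + ((norm (p - h))^2 + 2 * t * inner (p - h) (v - p) + t^2 * (norm (v - p))^2)/2"
        unfolding \<Phi>_def sq_expand .
      show ?thesis by (rule fa1[OF m1 c1])
    qed
    show ?thesis using small_t[OF _ key] by simp
  qed
  then show ?thesis using pK by blast
qed
lemma inner_sum_id:
  fixes p1 p2 h1 h2 :: "'x::real_inner"
  shows "inner (p1 - h1) (p2 - p1) + inner (p2 - h2) (p1 - p2) = inner (h1 - h2) (p1 - p2) - (norm (p1 - p2))^2"
  unfolding power2_norm_eq_inner by (simp add: inner_diff_left inner_diff_right inner_commute algebra_simps)

lemma inner_sum_id2:
  fixes p1 p2 a1 a2 g1 g2 :: "'x::real_inner"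
  shows "inner (a1 - g1) (p2 - p1) + inner (a2 - g2) (p1 - p2) = inner (g1 - g2) (p1 - p2) - inner (a1 - a2) (p1 - p2)"
  by (simp add: inner_diff_left inner_diff_right inner_commute algebra_simps)

lemma VI_est:
  fixes A :: "'x::real_inner \<Rightarrow> 'x"
  assumes A_mono: "\<And>u v. inner (A u - A v) (u - v) \<ge> mA * (norm (u - v))\<^sup>2" and mA: "mA > 0"
    and p: "p1 \<in> K" "p2 \<in> K"
    and h1: "\<forall>v\<in>K. 0 \<le> inner (A p1 - g1) (v - p1) + \<phi>1 v - \<phi>1 p1"
    and h2: "\<forall>v\<in>K. 0 \<le> inner (A p2 - g2) (v - p2) + \<phi>2 v - \<phi>2 p2"
    and jest: "\<phi>1 p2 - \<phi>1 p1 + \<phi>2 p1 - \<phi>2 p2 \<le> c * norm (p1 - p2)" and c: "c \<ge> 0"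
  shows "mA * norm (p1 - p2) \<le> norm (g1 - g2) + c"
proof (cases "p1 = p2")
  case True then show ?thesis using c by simp
next
  case False
  have s: "0 \<le> inner (A p1 - g1) (p2 - p1) + inner (A p2 - g2) (p1 - p2) + (\<phi>1 p2 - \<phi>1 p1 + \<phi>2 p1 - \<phi>2 p2)"
    using h1 p(2) h2 p(1) by fastforce
  have "mA * (norm (p1 - p2))^2 \<le> inner (A p1 - A p2) (p1 - p2)" using A_mono .
  also have "\<dots> \<le> inner (g1 - g2) (p1 - p2) + c * norm (p1 - p2)"
    using s jest unfolding inner_sum_id2 by linarith
  also have "\<dots> \<le> (norm (g1 - g2) + c) * norm (p1 - p2)"
    using norm_cauchy_schwarz[of "g1 - g2" "p1 - p2"] by (simp add: algebra_simps)
  finally have "(mA * norm (p1 - p2)) * norm (p1 - p2) \<le> (norm (g1 - g2) + c) * norm (p1 - p2)"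
    by (simp add: power2_eq_square algebra_simps)
  moreover have "norm (p1 - p2) > 0" using False by simp
  ultimately show ?thesis by simp
qed

lemma VI_unique:
  fixes A :: "'x::real_inner \<Rightarrow> 'x"
  assumes A_mono: "\<And>u v. inner (A u - A v) (u - v) \<ge> mA * (norm (u - v))\<^sup>2" and mA: "mA > 0"
    and p: "p1 \<in> K" "p2 \<in> K"
    and h1: "\<forall>v\<in>K. 0 \<le> inner (A p1 - g) (v - p1) + \<phi> v - \<phi> p1"
    and h2: "\<forall>v\<in>K. 0 \<le> inner (A p2 - g) (v - p2) + \<phi> v - \<phi> p2"
  shows "p1 = p2"
proof -
  have "mA * norm (p1 - p2) \<le> norm (g - g) + 0"
    by (rule VI_est[OF A_mono mA p h1 h2]) simp_all
  then have "norm (p1 - p2) \<le> 0" using mA by (simp add: mult_le_0_iff)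
  then show ?thesis by simp
qed

lemma contr_factor:
  fixes x :: real assumes "x > 0"
  shows "0 \<le> max 0 (1 - x/2)" "max 0 (1 - x/2) < 1" "1 - x \<le> (max 0 (1 - x/2))^2"
proof -
  show "0 \<le> max 0 (1 - x/2)" by simp
  show "max 0 (1 - x/2) < 1" using assms by simp
  show "1 - x \<le> (max 0 (1 - x/2))^2"
  proof (cases "1 - x/2 \<ge> 0")
    case True
    then have "(max 0 (1 - x/2))^2 = (1 - x/2)^2" by simp
    also have "\<dots> = 1 - x + x^2/4" by (simp add: power2_eq_square field_simps)
    finally show ?thesis by (simp add: add_increasing2)
  next
    case False
    then show ?thesis by simp
  qed
qed

lemma VI_exists:
  fixes K :: "'x::{real_inner,complete_space} set" and A :: "'x \<Rightarrow> 'x" and \<phi> :: "'x \<Rightarrow> real"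
  assumes K: "K \<noteq> {}" "closed K" "convex K" and cv: "convex_on K \<phi>"
    and lip: "\<forall>v\<in>K. \<forall>w\<in>K. \<bar>\<phi> v - \<phi> w\<bar> \<le> L * norm (v - w)"
    and mA: "mA > 0" and LA: "LA > 0"
    and A_mono: "\<And>u v. inner (A u - A v) (u - v) \<ge> mA * (norm (u - v))\<^sup>2"
    and A_lip: "\<And>u v. norm (A u - A v) \<le> LA * norm (u - v)"
  shows "\<exists>u\<in>K. \<forall>v\<in>K. 0 \<le> inner (A u - g) (v - u) + \<phi> v - \<phi> u"
proof -
  define \<rho> where "\<rho> = mA / LA^2"
  have \<rho>: "\<rho> > 0" using mA LA by (simp add: \<rho>_def)
  have cv\<rho>: "convex_on K (\<lambda>v. \<rho> * \<phi> v)" using \<rho> cv by (intro convex_on_cmul) auto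
  have lip\<rho>: "\<forall>v\<in>K. \<forall>w\<in>K. \<bar>\<rho> * \<phi> v - \<rho> * \<phi> w\<bar> \<le> (\<rho> * L) * norm (v - w)"
  proof (intro ballI)
    fix v w assume "v \<in> K" "w \<in> K"
    then have "\<bar>\<phi> v - \<phi> w\<bar> \<le> L * norm (v - w)" using lip by blast
    then have "\<rho> * \<bar>\<phi> v - \<phi> w\<bar> \<le> \<rho> * (L * norm (v - w))" using \<rho> by simp
    moreover have "\<bar>\<rho> * \<phi> v - \<rho> * \<phi> w\<bar> = \<rho> * \<bar>\<phi> v - \<phi> w\<bar>"
      using \<rho> by (simp add: abs_mult flip: right_diff_distrib)
    ultimately show "\<bar>\<rho> * \<phi> v - \<rho> * \<phi> w\<bar> \<le> (\<rho> * L) * norm (v - w)" by simp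
  qed
  define Q where "Q h p \<longleftrightarrow> p \<in> K \<and> (\<forall>v\<in>K. 0 \<le> inner (p - h) (v - p) + \<rho> * \<phi> v - \<rho> * \<phi> p)" for h p
  define P where "P h = (SOME p. Q h p)" for h
  have P: "Q h (P h)" for h
  proof -
    obtain p where "p \<in> K" "\<forall>v\<in>K. 0 \<le> inner (p - h) (v - p) + \<rho> * \<phi> v - \<rho> * \<phi> p"
      using prox_exists[OF K cv\<rho> lip\<rho>, of h] by blast
    then have "Q h p" unfolding Q_def by blast
    then show ?thesis unfolding P_def by (rule someI)
  qed
  have nonexp: "norm (P h1 - P h2) \<le> norm (h1 - h2)" for h1 h2
  proof (cases "P h1 = P h2")
    case True then show ?thesis by simp
  next
    case False
    have q1: "P h1 \<in> K" and q2: "P h2 \<in> K" using conjunct1[OF P[unfolded Q_def]] by blast+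
    have a1: "0 \<le> inner (P h1 - h1) (P h2 - P h1) + \<rho> * \<phi> (P h2) - \<rho> * \<phi> (P h1)"
      using bspec[OF conjunct2[OF P[of h1, unfolded Q_def]] q2] .
    have a2: "0 \<le> inner (P h2 - h2) (P h1 - P h2) + \<rho> * \<phi> (P h1) - \<rho> * \<phi> (P h2)"
      using bspec[OF conjunct2[OF P[of h2, unfolded Q_def]] q1] .
    have "(norm (P h1 - P h2))^2 \<le> inner (h1 - h2) (P h1 - P h2)"
      using a1 a2 inner_sum_id[of "P h1" h1 "P h2" h2] by linarith
    also have "\<dots> \<le> norm (h1 - h2) * norm (P h1 - P h2)" by (rule norm_cauchy_schwarz)
    finally have "norm (P h1 - P h2) * norm (P h1 - P h2) \<le> norm (h1 - h2) * norm (P h1 - P h2)"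
      by (simp add: power2_eq_square)
    moreover have "norm (P h1 - P h2) > 0" using False by simp
    ultimately show ?thesis by simp
  qed
  define F where "F u = P (u - \<rho> *\<^sub>R (A u - g))" for u
  define x where "x = mA^2 / LA^2"
  have x: "x > 0" using mA LA by (simp add: x_def)
  define c where "c = max 0 (1 - x/2)"
  have c: "0 \<le> c" "c < 1" "1 - x \<le> c^2" using contr_factor[OF x] unfolding c_def by auto
  have contr: "dist (F u1) (F u2) \<le> c * dist u1 u2" for u1 u2
  proof -
    define d where "d = u1 - u2"
    define D where "D = A u1 - A u2"
    have "dist (F u1) (F u2) \<le> norm ((u1 - \<rho> *\<^sub>R (A u1 - g)) - (u2 - \<rho> *\<^sub>R (A u2 - g)))"
      unfolding F_def dist_norm by (rule nonexp)
    also have "(u1 - \<rho> *\<^sub>R (A u1 - g)) - (u2 - \<rho> *\<^sub>R (A u2 - g)) = d + (- \<rho>) *\<^sub>R D"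
      unfolding d_def D_def by (simp add: algebra_simps scaleR_diff_right)
    finally have 1: "dist (F u1) (F u2) \<le> norm (d + (- \<rho>) *\<^sub>R D)" .
    have "(norm (d + (- \<rho>) *\<^sub>R D))^2 = (norm d)^2 + 2 * (- \<rho>) * inner d D + (-\<rho>)^2 * (norm D)^2"
      by (rule sq_expand0)
    also have "\<dots> = (norm d)^2 - 2 * \<rho> * inner D d + \<rho>^2 * (norm D)^2"
      by (simp add: inner_commute)
    also have "\<dots> \<le> (norm d)^2 - 2 * \<rho> * (mA * (norm d)^2) + \<rho>^2 * (LA * norm d)^2"
    proof -
      have "mA * (norm d)^2 \<le> inner D d" using A_mono unfolding D_def d_def .
      then have i1: "2 * \<rho> * (mA * (norm d)^2) \<le> 2 * \<rho> * inner D d" using \<rho> by simp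
      have "norm D \<le> LA * norm d" using A_lip unfolding D_def d_def .
      then have "(norm D)^2 \<le> (LA * norm d)^2" by (simp add: power_mono)
      then have i2: "\<rho>^2 * (norm D)^2 \<le> \<rho>^2 * (LA * norm d)^2" by (simp add: mult_left_mono)
      show ?thesis using i1 i2 by linarith
    qed
    also have "\<dots> = (1 - x) * (norm d)^2"
      unfolding \<rho>_def x_def using LA by (simp add: power2_eq_square field_simps)
    also have "\<dots> \<le> c^2 * (norm d)^2" using c(3) by (simp add: mult_right_mono)
    also have "\<dots> = (c * norm d)^2" by (simp add: power_mult_distrib)
    finally have sq: "(norm (d + (- \<rho>) *\<^sub>R D))^2 \<le> (c * norm d)^2" .
    have "norm (d + (- \<rho>) *\<^sub>R D) \<le> c * norm d"
      by (rule power2_le_imp_le[OF sq]) (simp add: c(1))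
    then show ?thesis using 1 unfolding d_def dist_norm by linarith
  qed
  have FK: "F ` K \<subseteq> K" using P unfolding F_def Q_def by blast
  have "complete K" using K(2) by (simp add: complete_eq_closed)
  then obtain u where uK: "u \<in> K" and Fu: "F u = u"
    using Banach_fix[OF _ K(1) c(1) c(2) FK] contr by blast
  have "Q (u - \<rho> *\<^sub>R (A u - g)) u" using P[of "u - \<rho> *\<^sub>R (A u - g)"] Fu unfolding F_def by simp
  then have "\<forall>v\<in>K. 0 \<le> inner (u - (u - \<rho> *\<^sub>R (A u - g))) (v - u) + \<rho> * \<phi> v - \<rho> * \<phi> u"
    unfolding Q_def by blast
  then have "\<forall>v\<in>K. 0 \<le> \<rho> * (inner (A u - g) (v - u) + \<phi> v - \<phi> u)"
    by (simp add: algebra_simps)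
  then have "\<forall>v\<in>K. 0 \<le> inner (A u - g) (v - u) + \<phi> v - \<phi> u"
    using \<rho> by (simp add: zero_le_mult_iff)
  then show ?thesis using uK by blast
qed
lemma Cset_eq: "Cset K j \<eta> = {\<xi>. \<forall>v\<in>K. inner \<xi> v \<le> j \<eta> v}"
  unfolding Cset_def Jext_def by auto

lemma poshom_basics:
  fixes K :: "'x::real_inner set" and \<phi> :: "'x \<Rightarrow> real"
  assumes cone: "cone K" and conv: "convex K" and ne: "K \<noteq> {}"
    and ph: "\<forall>c v. c > 0 \<longrightarrow> v \<in> K \<longrightarrow> \<phi> (c *\<^sub>R v) = c * \<phi> v"
    and cv: "convex_on K \<phi>"
  shows "0 \<in> K" "\<phi> 0 = 0"
    and "\<And>u w. u \<in> K \<Longrightarrow> w \<in> K \<Longrightarrow> u + w \<in> K \<and> \<phi> (u + w) \<le> \<phi> u + \<phi> w"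
    and "\<And>u. u \<in> K \<Longrightarrow> 2 *\<^sub>R u \<in> K \<and> \<phi> (2 *\<^sub>R u) = 2 * \<phi> u"
proof -
  obtain k where k: "k \<in> K" using ne by auto
  show z: "0 \<in> K" using cone k unfolding cone_def by (metis order_refl scaleR_zero_left)
  have "(2::real) > 0 \<longrightarrow> 0 \<in> K \<longrightarrow> \<phi> ((2::real) *\<^sub>R 0) = 2 * \<phi> 0" using ph by blast
  then have "\<phi> 0 = 2 * \<phi> 0" using z by simp
  then show "\<phi> 0 = 0" by linarith
  show "2 *\<^sub>R u \<in> K \<and> \<phi> (2 *\<^sub>R u) = 2 * \<phi> u" if "u \<in> K" for u
    using that cone ph unfolding cone_def by auto
  show "u + w \<in> K \<and> \<phi> (u + w) \<le> \<phi> u + \<phi> w" if u: "u \<in> K" and w: "w \<in> K" for u w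
  proof -
    have mK: "(1 - 1/2) *\<^sub>R u + (1/2) *\<^sub>R w \<in> K"
      by (rule convexD[OF conv u w]) auto
    have eq: "u + w = (2::real) *\<^sub>R ((1 - 1/2) *\<^sub>R u + (1/2) *\<^sub>R w)"
      by (simp add: algebra_simps flip: scaleR_add_right)
    have "\<phi> ((1 - 1/2) *\<^sub>R u + (1/2) *\<^sub>R w) \<le> (1 - 1/2) * \<phi> u + (1/2) * \<phi> w"
      by (rule convex_onD[OF cv]) (use u w in auto)
    moreover have "\<phi> (u + w) = 2 * \<phi> ((1 - 1/2) *\<^sub>R u + (1/2) *\<^sub>R w)"
      using ph mK eq by simp
    moreover have "u + w \<in> K" using cone mK eq unfolding cone_def by (metis zero_le_numeral)
    ultimately show ?thesis by simp
  qed
qed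

lemma VI_to_C:
  fixes K :: "'x::real_inner set" and \<phi> :: "'x \<Rightarrow> real"
  assumes cone: "cone K" and conv: "convex K" and ne: "K \<noteq> {}"
    and ph: "\<forall>c v. c > 0 \<longrightarrow> v \<in> K \<longrightarrow> \<phi> (c *\<^sub>R v) = c * \<phi> v"
    and cv: "convex_on K \<phi>"
    and p: "p \<in> K" and vi: "\<forall>v\<in>K. inner \<xi> (v - p) \<le> \<phi> v - \<phi> p"
  shows "\<forall>v\<in>K. inner \<xi> v \<le> \<phi> v" "inner \<xi> p = \<phi> p"
proof -
  note b = poshom_basics[OF cone conv ne ph cv]
  have "inner \<xi> (0 - p) \<le> \<phi> 0 - \<phi> p" using vi b(1) by blast
  then have 1: "\<phi> p \<le> inner \<xi> p" using b(2) by simp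
  have "inner \<xi> (2 *\<^sub>R p - p) \<le> \<phi> (2 *\<^sub>R p) - \<phi> p" using vi b(4)[OF p] by blast
  then have 2: "inner \<xi> p \<le> \<phi> p" using b(4)[OF p] by (simp add: algebra_simps)
  show "inner \<xi> p = \<phi> p" using 1 2 by simp
  show "\<forall>v\<in>K. inner \<xi> v \<le> \<phi> v"
  proof
    fix w assume w: "w \<in> K"
    have "inner \<xi> ((p + w) - p) \<le> \<phi> (p + w) - \<phi> p" using vi b(3)[OF p w] by blast
    then show "inner \<xi> w \<le> \<phi> w" using b(3)[OF p w] by simp
  qed
qed

lemma nc_from_VI:
  assumes pK: "p \<in> K" and C: "\<forall>v\<in>K. inner \<xi> v \<le> j \<eta> v" and eq: "inner \<xi> p = j \<eta> p"
  shows "- p \<in> normal_cone (Cset_t K j f \<eta> t) (f t - \<xi>)"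
proof -
  have xi: "\<xi> \<in> Cset K j \<eta>" using C unfolding Cset_eq by simp
  have mem: "f t - \<xi> \<in> Cset_t K j f \<eta> t" using xi unfolding Cset_t_def by blast
  have "inner (- p) (y - (f t - \<xi>)) \<le> 0" if yy: "y \<in> Cset_t K j f \<eta> t" for y
  proof -
    obtain \<xi>' where xi': "\<xi>' \<in> Cset K j \<eta>" and y: "y = f t - \<xi>'" using yy unfolding Cset_t_def by blast
    have "inner \<xi>' p \<le> j \<eta> p" using xi' pK unfolding Cset_eq by blast
    then show ?thesis using eq unfolding y by (simp add: inner_diff_right inner_commute)
  qed
  then show ?thesis using mem unfolding normal_cone_def by simp
qed

lemma VI_from_nc:
  fixes K :: "'x::{real_inner,complete_space} set" and \<phi> :: "'x \<Rightarrow> real"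
  assumes cone: "cone K" and conv: "convex K" and ne: "K \<noteq> {}" and cl: "closed K"
    and ph: "\<forall>c v. c > 0 \<longrightarrow> v \<in> K \<longrightarrow> j \<eta> (c *\<^sub>R v) = c * j \<eta> v"
    and cv: "convex_on K (j \<eta>)"
    and lip: "\<forall>v\<in>K. \<forall>w\<in>K. \<bar>j \<eta> v - j \<eta> w\<bar> \<le> L * norm (v - w)"
    and nc: "- w \<in> normal_cone (Cset_t K j f \<eta> t) z"
  shows "w \<in> K \<and> (\<forall>v\<in>K. 0 \<le> inner (z - f t) (v - w) + j \<eta> v - j \<eta> w)"
proof -
  define \<xi> where "\<xi> = f t - z"
  have zmem: "z \<in> Cset_t K j f \<eta> t" using nc unfolding normal_cone_def by (auto split: if_splits)
  then obtain \<xi>0 where "\<xi>0 \<in> Cset K j \<eta>" "z = f t - \<xi>0" unfolding Cset_t_def by blast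
  then have xiC: "\<forall>v\<in>K. inner \<xi> v \<le> j \<eta> v" unfolding \<xi>_def Cset_eq by simp
  have max: "inner w \<xi>' \<le> inner w \<xi>" if "\<forall>v\<in>K. inner \<xi>' v \<le> j \<eta> v" for \<xi>'
  proof -
    have "f t - \<xi>' \<in> Cset_t K j f \<eta> t" using that unfolding Cset_t_def Cset_eq by blast
    then have "inner (- w) ((f t - \<xi>') - z) \<le> 0" using nc zmem unfolding normal_cone_def by auto
    then show ?thesis unfolding \<xi>_def by (simp add: inner_diff_right)
  qed
  obtain p where pK: "p \<in> K" and pv: "\<forall>v\<in>K. 0 \<le> inner (p - (\<xi> + w)) (v - p) + j \<eta> v - j \<eta> p"
    using prox_exists[OF ne cl conv cv lip, of "\<xi> + w"] by blast
  define \<xi>p where "\<xi>p = \<xi> + w - p"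
  have vip: "\<forall>v\<in>K. inner \<xi>p (v - p) \<le> j \<eta> v - j \<eta> p"
  proof
    fix v assume "v \<in> K"
    then have "0 \<le> inner (p - (\<xi> + w)) (v - p) + j \<eta> v - j \<eta> p" using pv by blast
    moreover have "inner (p - (\<xi> + w)) (v - p) = - inner \<xi>p (v - p)"
      unfolding \<xi>p_def by (simp add: inner_diff_left inner_add_left)
    ultimately show "inner \<xi>p (v - p) \<le> j \<eta> v - j \<eta> p" by simp
  qed
  note C = VI_to_C[OF cone conv ne ph cv pK vip]
  have i1: "inner w (w - p) \<le> 0"
    using max[OF C(1)] unfolding \<xi>p_def by (simp add: inner_diff_right inner_add_right)
  have "inner \<xi> p \<le> j \<eta> p" using xiC pK by blast
  then have i2: "0 \<le> inner (w - p) p"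
    using C(2) unfolding \<xi>p_def by (simp add: inner_diff_left inner_add_left)
  have "(norm (w - p))^2 = inner w (w - p) - inner (w - p) p"
    unfolding power2_norm_eq_inner by (simp add: inner_diff_left inner_diff_right inner_commute)
  then have "(norm (w - p))^2 \<le> 0" using i1 i2 by linarith
  then have wp: "w = p" by simp
  have "\<forall>v\<in>K. 0 \<le> inner (z - f t) (v - w) + j \<eta> v - j \<eta> w"
  proof
    fix v assume v: "v \<in> K"
    have "inner \<xi> v \<le> j \<eta> v" using xiC v by blast
    moreover have "inner \<xi> w = j \<eta> w" using C(2) wp unfolding \<xi>p_def by simp
    moreover have "inner (z - f t) (v - w) = - inner \<xi> v + inner \<xi> w"
      unfolding \<xi>_def by (simp add: inner_diff_left inner_diff_right)
    ultimately show "0 \<le> inner (z - f t) (v - w) + j \<eta> v - j \<eta> w" by linarith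
  qed
  then show ?thesis using pK wp by simp
qed
lemma integral_exp_scaled:
  fixes \<beta> s :: real assumes b: "\<beta> > 0" and s: "0 \<le> s"
  shows "integral {0..s} (\<lambda>r. exp (\<beta> * r)) = (exp (\<beta> * s) - 1) / \<beta>"
proof -
  have "((\<lambda>r. exp (\<beta> * r)) has_integral (exp (\<beta> * s) / \<beta> - exp (\<beta> * 0) / \<beta>)) {0..s}"
  proof (rule fundamental_theorem_of_calculus[OF s])
    fix x assume "x \<in> {0..s}"
    have "((\<lambda>r. exp (\<beta> * r) / \<beta>) has_real_derivative (exp (\<beta> * x) * \<beta>) / \<beta>) (at x within {0..s})"
      using b by (intro derivative_eq_intros) auto
    then show "((\<lambda>r. exp (\<beta> * r) / \<beta>) has_vector_derivative exp (\<beta> * x)) (at x within {0..s})"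
      using b by (simp add: has_real_derivative_iff_has_vector_derivative)
  qed
  then show ?thesis by (simp add: integral_unique diff_divide_distrib)
qed

lemma iter_bound:
  fixes d :: "nat \<Rightarrow> real \<Rightarrow> real"
  assumes q: "0 \<le> q" "q < 1" and M: "0 \<le> M" and D: "0 \<le> D"
    and cont: "\<And>n. continuous_on {0..T} (d n)"
    and d0: "\<And>s. s \<in> {0..T} \<Longrightarrow> d 0 s \<le> D"
    and rec: "\<And>n s. s \<in> {0..T} \<Longrightarrow> d (Suc n) s \<le> q * d n s + M * integral {0..s} (d n)"
  shows "\<exists>\<theta> \<beta>. 0 \<le> \<theta> \<and> \<theta> < 1 \<and> 0 < \<beta> \<and> (\<forall>n. \<forall>s\<in>{0..T}. d n s \<le> \<theta>^n * D * exp (\<beta> * s))"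
proof -
  define \<beta> where "\<beta> = 2 * M / (1 - q) + 1"
  have b: "\<beta> > 0" using q M unfolding \<beta>_def by (simp add: add_nonneg_pos)
  define \<theta> where "\<theta> = q + M / \<beta>"
  have th0: "0 \<le> \<theta>" using q M b unfolding \<theta>_def by simp
  have "M / \<beta> < (1 - q)"
  proof -
    have "(1 - q) * \<beta> = 2 * M + (1 - q)" unfolding \<beta>_def using q by (simp add: field_simps)
    then have "M < (1 - q) * \<beta>" using q M by linarith
    then show ?thesis using b by (simp add: divide_less_eq mult.commute)
  qed
  then have th1: "\<theta> < 1" unfolding \<theta>_def by simp
  have main: "\<forall>s\<in>{0..T}. d n s \<le> \<theta>^n * D * exp (\<beta> * s)" for n
  proof (induction n)
    case 0
    show ?case
    proof
      fix s assume s: "s \<in> {0..T}"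
      have "1 \<le> exp (\<beta> * s)" using b s by simp
      then have "D \<le> D * exp (\<beta> * s)" using D by (simp add: mult_le_cancel_left1)
      then show "d 0 s \<le> \<theta>^0 * D * exp (\<beta> * s)" using d0[OF s] by simp
    qed
  next
    case (Suc n)
    show ?case
    proof
      fix s assume s: "s \<in> {0..T}"
      define c where "c = \<theta>^n * D"
      have c0: "0 \<le> c" unfolding c_def using th0 D by simp
      have sub: "{0..s} \<subseteq> {0..T}" using s by auto
      have int1: "d n integrable_on {0..s}"
        by (rule integrable_continuous_interval) (rule continuous_on_subset[OF cont sub])
      have int2: "(\<lambda>r. c * exp (\<beta> * r)) integrable_on {0..s}"
        by (intro integrable_continuous_interval continuous_intros)
      have "integral {0..s} (d n) \<le> integral {0..s} (\<lambda>r. c * exp (\<beta> * r))"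
      proof (rule integral_le[OF int1 int2])
        fix r assume "r \<in> {0..s}"
        then show "d n r \<le> c * exp (\<beta> * r)" using Suc.IH sub unfolding c_def by auto
      qed
      also have "\<dots> = c * ((exp (\<beta> * s) - 1) / \<beta>)"
        using integral_exp_scaled[OF b] s by simp
      finally have I: "integral {0..s} (d n) \<le> c * ((exp (\<beta> * s) - 1) / \<beta>)" .
      have "d (Suc n) s \<le> q * d n s + M * integral {0..s} (d n)" by (rule rec[OF s])
      also have "\<dots> \<le> q * (c * exp (\<beta> * s)) + M * (c * ((exp (\<beta> * s) - 1) / \<beta>))"
      proof (rule add_mono)
        show "q * d n s \<le> q * (c * exp (\<beta> * s))" using Suc.IH s q unfolding c_def by (simp add: mult_left_mono)
        show "M * integral {0..s} (d n) \<le> M * (c * ((exp (\<beta> * s) - 1) / \<beta>))" by (rule mult_left_mono[OF I M])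
      qed
      also have "\<dots> \<le> q * (c * exp (\<beta> * s)) + M * (c * (exp (\<beta> * s) / \<beta>))"
      proof -
        have e1: "(exp (\<beta> * s) - 1) / \<beta> \<le> exp (\<beta> * s) / \<beta>" using b by (simp add: divide_right_mono)
        show ?thesis by (rule add_left_mono[OF mult_left_mono[OF mult_left_mono[OF e1 c0] M]])
      qed
      also have "\<dots> = \<theta>^(Suc n) * D * exp (\<beta> * s)"
        unfolding c_def \<theta>_def by (simp add: field_simps)
      finally show "d (Suc n) s \<le> \<theta>^(Suc n) * D * exp (\<beta> * s)" .
    qed
  qed
  show ?thesis using th0 th1 b main by blast
qed
lemma sum_lt: fixes d a b B e :: real shows "d \<le> a + b \<Longrightarrow> 2 * B < e \<Longrightarrow> a \<le> B \<Longrightarrow> b \<le> B \<Longrightarrow> d < e" by linarith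

lemma lt_half: fixes B e :: real shows "B < e/2 \<Longrightarrow> 2 * B < e" by (simp add: field_simps)

lemma geo_tail:
  fixes x :: "nat \<Rightarrow> 'a::real_normed_vector"
  assumes inc: "\<And>n. norm (x (Suc n) - x n) \<le> \<theta>^n * C" and th: "0 \<le> \<theta>" "\<theta> < 1" and C: "0 \<le> C"
  shows "norm (x (n + k) - x n) \<le> \<theta>^n * C / (1 - \<theta>)"
proof -
  have "norm (x (n + k) - x n) \<le> \<theta>^n * C * (1 - \<theta>^k) / (1 - \<theta>)"
  proof (induction k)
    case 0 then show ?case by simp
  next
    case (Suc k)
    have "x (n + Suc k) - x n = (x (Suc (n + k)) - x (n + k)) + (x (n + k) - x n)" by simp
    then have "norm (x (n + Suc k) - x n) \<le> norm (x (Suc (n + k)) - x (n + k)) + norm (x (n + k) - x n)"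
      using norm_triangle_ineq by metis
    also have "\<dots> \<le> \<theta>^(n + k) * C + \<theta>^n * C * (1 - \<theta>^k) / (1 - \<theta>)"
      using inc[of "n + k"] Suc.IH by linarith
    also have "\<dots> = \<theta>^n * C * (1 - \<theta>^Suc k) / (1 - \<theta>)"
      using th by (simp add: field_simps power_add)
    finally show ?case .
  qed
  also have "\<dots> \<le> \<theta>^n * C / (1 - \<theta>)"
  proof -
    have "0 \<le> \<theta>^n * C" using th C by simp
    moreover have "(1 - \<theta>^k) \<le> 1" using th by simp
    ultimately have "\<theta>^n * C * (1 - \<theta>^k) \<le> \<theta>^n * C" by (simp add: mult_left_le)
    then show ?thesis using th by (simp add: divide_right_mono)
  qed
  finally show ?thesis .
qed

lemma geo_conv:
  fixes x :: "nat \<Rightarrow> 'a::{real_normed_vector,complete_space}"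
  assumes inc: "\<And>n. norm (x (Suc n) - x n) \<le> \<theta>^n * C" and th: "0 \<le> \<theta>" "\<theta> < 1" and C: "0 \<le> C"
  shows "\<exists>l. x \<longlonglongrightarrow> l \<and> (\<forall>n. norm (l - x n) \<le> \<theta>^n * C / (1 - \<theta>))"
proof -
  note tail = geo_tail[OF inc th C]
  have z: "(\<lambda>n. \<theta>^n * C / (1 - \<theta>)) \<longlonglongrightarrow> 0"
    using th by (intro tendsto_divide_zero tendsto_mult_left_zero LIMSEQ_power_zero) auto
  have "Cauchy x"
  proof (rule metric_CauchyI)
    fix e :: real assume e: "e > 0"
    have "\<forall>\<^sub>F n in sequentially. \<theta>^n * C / (1 - \<theta>) < e/2"
      by (rule order_tendstoD(2)[OF z]) (use e in simp)
    then obtain N where N: "\<And>n. n \<ge> N \<Longrightarrow> \<theta>^n * C / (1 - \<theta>) < e/2"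
      unfolding eventually_sequentially by blast
    have "dist (x m) (x n) < e" if "m \<ge> N" "n \<ge> N" for m n
    proof -
      have 1: "norm (x m - x N) \<le> \<theta>^N * C / (1 - \<theta>)" using tail[of N "m - N"] that by simp
      have 2: "norm (x n - x N) \<le> \<theta>^N * C / (1 - \<theta>)" using tail[of N "n - N"] that by simp
      have "x m - x n = (x m - x N) - (x n - x N)" by simp
      then have "dist (x m) (x n) \<le> norm (x m - x N) + norm (x n - x N)"
        unfolding dist_norm using norm_triangle_ineq4 by metis
      moreover have "2 * (\<theta>^N * C / (1 - \<theta>)) < e" using lt_half[OF N[of N]] by simp
      ultimately show ?thesis using sum_lt 1 2 by blast
    qed
    then show "\<exists>M. \<forall>m\<ge>M. \<forall>n\<ge>M. dist (x m) (x n) < e" by blast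
  qed
  then obtain l where l: "x \<longlonglongrightarrow> l" using Cauchy_convergent_iff convergent_def by blast
  have "norm (l - x n) \<le> \<theta>^n * C / (1 - \<theta>)" for n
  proof -
    have "(\<lambda>k. x (n + k)) \<longlonglongrightarrow> l" using LIMSEQ_ignore_initial_segment[OF l, of n] by (simp add: add.commute)
    then have "(\<lambda>k. norm (x (n + k) - x n)) \<longlonglongrightarrow> norm (l - x n)" by (intro tendsto_intros)
    then show ?thesis using tail by (intro LIMSEQ_le_const2) auto
  qed
  then show ?thesis using l by blast
qed
theorem theorem3p1:
  fixes I :: "real set" and T :: real
    and K :: "'x::{real_inner,complete_space} set"
    and A :: "'x \<Rightarrow> 'x" and mA LA :: real
    and R :: "(real \<Rightarrow> 'x) \<Rightarrow> (real \<Rightarrow> 'y::{real_inner,complete_space})"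
    and S :: "(real \<Rightarrow> 'x) \<Rightarrow> (real \<Rightarrow> 'x)"
    and j :: "'y \<Rightarrow> 'x \<Rightarrow> real" and \<alpha>j :: real
    and f :: "real \<Rightarrow> 'x"
  assumes I_def: "(T > 0 \<and> I = {0..T}) \<or> I = {0..}"
    and K_ne: "K \<noteq> {}" and K_closed: "closed K" and K_convex: "convex K" and K_cone: "cone K"
    and mA_pos: "mA > 0" and LA_pos: "LA > 0"
    and A_mono: "\<And>u v. inner (A u - A v) (u - v) \<ge> mA * (norm (u - v))\<^sup>2"
    and A_lip: "\<And>u v. norm (A u - A v) \<le> LA * norm (u - v)"
    and R_cont: "\<And>u. continuous_on I u \<Longrightarrow> continuous_on I (R u)"
    and S_cont: "\<And>u. continuous_on I u \<Longrightarrow> continuous_on I (S u)"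
    and RS_est: "\<And>J. compact J \<Longrightarrow> J \<subseteq> I \<Longrightarrow>
        \<exists>lR LR lS LS. lR > 0 \<and> LR > 0 \<and> lS > 0 \<and> LS > 0 \<and>
          (\<forall>u1 u2 t. continuous_on I u1 \<longrightarrow> continuous_on I u2 \<longrightarrow> t \<in> J \<longrightarrow>
             norm (R u1 t - R u2 t) \<le> lR * norm (u1 t - u2 t)
               + LR * integral {0..t} (\<lambda>s. norm (u1 s - u2 s))) \<and>
          (\<forall>u1 u2 t. continuous_on I u1 \<longrightarrow> continuous_on I u2 \<longrightarrow> t \<in> J \<longrightarrow>
             norm (S u1 t - S u2 t) \<le> lS * norm (u1 t - u2 t)
               + LS * integral {0..t} (\<lambda>s. norm (u1 s - u2 s))) \<and>
          (\<alpha>j + 1) * (lR + lS) < mA"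
    and j_convex: "\<And>\<eta>. convex_on K (j \<eta>)"
    and j_poshom: "\<And>\<eta> c v. c > 0 \<Longrightarrow> v \<in> K \<Longrightarrow> j \<eta> (c *\<^sub>R v) = c * j \<eta> v"
    and j_lip: "\<And>\<eta>. \<exists>L. \<forall>v\<in>K. \<forall>w\<in>K. \<bar>j \<eta> v - j \<eta> w\<bar> \<le> L * norm (v - w)"
    and \<alpha>j_nonneg: "\<alpha>j \<ge> 0"
    and j_est: "\<And>\<eta>1 \<eta>2 v1 v2. v1 \<in> K \<Longrightarrow> v2 \<in> K \<Longrightarrow>
        j \<eta>1 v2 - j \<eta>1 v1 + j \<eta>2 v1 - j \<eta>2 v2 \<le> \<alpha>j * norm (\<eta>1 - \<eta>2) * norm (v1 - v2)"
    and f_cont: "continuous_on I f"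
  shows "\<exists>u. continuous_on I u \<and> (\<forall>t\<in>I. u t \<in> K) \<and>
           (\<forall>t\<in>I. - u t \<in> normal_cone (Cset_t K j f (R u t) t) (A (u t) + S u t)) \<and>
           (\<forall>w. continuous_on I w \<and>
                (\<forall>t\<in>I. - w t \<in> normal_cone (Cset_t K j f (R w t) t) (A (w t) + S w t))
                \<longrightarrow> (\<forall>t\<in>I. w t = u t))"
proof -
  have I_sub: "{0..t} \<subseteq> I" if "t \<in> I" for t using I_def that by auto
  have I_nonneg: "0 \<le> t" if "t \<in> I" for t using I_def that by auto
  have I_loc: "\<exists>T'\<in>I. t \<le> T' \<and> at t within I = at t within {0..T'}" if t: "t \<in> I" for t
  proof (cases "T > 0 \<and> I = {0..T}")
    case True then show ?thesis using t by auto
  next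
    case False
    then have I: "I = {0..}" using I_def by blast
    have "at t within {0..} = at t within {0..t+1}"
      by (rule at_within_nhd[of _ "{..<t+1}"]) auto
    moreover have "t + 1 \<in> I" "t \<le> t + 1" using I t by auto
    ultimately show ?thesis using I by metis
  qed
  have I_cont: "continuous_on I g" if "\<And>T'. T' \<in> I \<Longrightarrow> continuous_on {0..T'} g" for g :: "real \<Rightarrow> 'x"
    unfolding continuous_on_eq_continuous_within
  proof
    fix t assume t: "t \<in> I"
    obtain T' where T': "T' \<in> I" "t \<le> T'" and at: "at t within I = at t within {0..T'}" using I_loc[OF t] by blast
    have "continuous (at t within {0..T'}) g"
      using that[OF T'(1)] I_nonneg[OF t] T'(2) by (simp add: continuous_on_eq_continuous_within)
    then show "continuous (at t within I) g" unfolding continuous_within at by simp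
  qed
  have jph: "\<forall>c v. c > 0 \<longrightarrow> v \<in> K \<longrightarrow> j \<eta> (c *\<^sub>R v) = c * j \<eta> v" for \<eta> using j_poshom by blast
  have j_lipL: "\<exists>L. \<forall>v\<in>K. \<forall>w\<in>K. \<bar>j \<eta> v - j \<eta> w\<bar> \<le> L * norm (v - w)" for \<eta> using j_lip by blast
  have VIex: "\<exists>!p. p \<in> K \<and> (\<forall>v\<in>K. 0 \<le> inner (A p - g) (v - p) + j \<eta> v - j \<eta> p)" for \<eta> g
  proof -
    obtain L where L: "\<forall>v\<in>K. \<forall>w\<in>K. \<bar>j \<eta> v - j \<eta> w\<bar> \<le> L * norm (v - w)" using j_lipL by blast
    obtain p where "p \<in> K" "\<forall>v\<in>K. 0 \<le> inner (A p - g) (v - p) + j \<eta> v - j \<eta> p"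
      using VI_exists[OF K_ne K_closed K_convex j_convex L mA_pos LA_pos A_mono A_lip, of g] by blast
    moreover have "p1 = p2" if "p1 \<in> K \<and> (\<forall>v\<in>K. 0 \<le> inner (A p1 - g) (v - p1) + j \<eta> v - j \<eta> p1)"
      "p2 \<in> K \<and> (\<forall>v\<in>K. 0 \<le> inner (A p2 - g) (v - p2) + j \<eta> v - j \<eta> p2)" for p1 p2
      using VI_unique[OF A_mono mA_pos, of p1 K p2 g "j \<eta>"] that by blast
    ultimately show ?thesis by blast
  qed
  define sol where "sol \<eta> g = (THE p. p \<in> K \<and> (\<forall>v\<in>K. 0 \<le> inner (A p - g) (v - p) + j \<eta> v - j \<eta> p))" for \<eta> g
  have sol: "sol \<eta> g \<in> K \<and> (\<forall>v\<in>K. 0 \<le> inner (A (sol \<eta> g) - g) (v - sol \<eta> g) + j \<eta> v - j \<eta> (sol \<eta> g))" for \<eta> g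
    unfolding sol_def by (rule theI'[OF VIex])
  have sol_uniq: "p = sol \<eta> g" if "p \<in> K" "\<forall>v\<in>K. 0 \<le> inner (A p - g) (v - p) + j \<eta> v - j \<eta> p" for p \<eta> g
    unfolding sol_def using that by (intro the1_equality[OF VIex, symmetric]) blast
  have sol_est: "mA * norm (sol \<eta>1 g1 - sol \<eta>2 g2) \<le> norm (g1 - g2) + \<alpha>j * norm (\<eta>1 - \<eta>2)" for \<eta>1 \<eta>2 g1 g2
  proof -
    have s1: "sol \<eta>1 g1 \<in> K" and s2: "sol \<eta>2 g2 \<in> K" using sol by blast+
    show ?thesis
    proof (rule VI_est[OF A_mono mA_pos s1 s2])
      show "\<forall>v\<in>K. 0 \<le> inner (A (sol \<eta>1 g1) - g1) (v - sol \<eta>1 g1) + j \<eta>1 v - j \<eta>1 (sol \<eta>1 g1)" using sol by blast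
      show "\<forall>v\<in>K. 0 \<le> inner (A (sol \<eta>2 g2) - g2) (v - sol \<eta>2 g2) + j \<eta>2 v - j \<eta>2 (sol \<eta>2 g2)" using sol by blast
      show "j \<eta>1 (sol \<eta>2 g2) - j \<eta>1 (sol \<eta>1 g1) + j \<eta>2 (sol \<eta>1 g1) - j \<eta>2 (sol \<eta>2 g2)
            \<le> \<alpha>j * norm (\<eta>1 - \<eta>2) * norm (sol \<eta>1 g1 - sol \<eta>2 g2)"
        by (rule j_est[OF s1 s2])
      show "0 \<le> \<alpha>j * norm (\<eta>1 - \<eta>2)" using \<alpha>j_nonneg by simp
    qed
  qed
  define \<Lambda> where "\<Lambda> u t = sol (R u t) (f t - S u t)" for u t
  have \<Lambda>_est: "norm (\<Lambda> u1 t - \<Lambda> u2 t) \<le> (norm (S u1 t - S u2 t) + \<alpha>j * norm (R u1 t - R u2 t)) / mA" for u1 u2 t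
  proof -
    have "mA * norm (\<Lambda> u1 t - \<Lambda> u2 t) \<le> norm ((f t - S u1 t) - (f t - S u2 t)) + \<alpha>j * norm (R u1 t - R u2 t)"
      unfolding \<Lambda>_def by (rule sol_est)
    also have "norm ((f t - S u1 t) - (f t - S u2 t)) = norm (S u1 t - S u2 t)"
    proof -
      have "(f t - S u1 t) - (f t - S u2 t) = - (S u1 t - S u2 t)" by simp
      then show ?thesis by (simp only: norm_minus_cancel)
    qed
    finally show ?thesis using mA_pos by (simp add: field_simps)
  qed
  have \<Lambda>_cont: "continuous_on I (\<Lambda> u)" if u: "continuous_on I u" for u
    unfolding continuous_on_def
  proof
    fix t assume t: "t \<in> I"
    have f: "(f \<longlongrightarrow> f t) (at t within I)" using f_cont t by (simp add: continuous_on_def)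
    have Su: "(S u \<longlongrightarrow> S u t) (at t within I)" using S_cont[OF u] t by (simp add: continuous_on_def)
    have Ru: "(R u \<longlongrightarrow> R u t) (at t within I)" using R_cont[OF u] t by (simp add: continuous_on_def)
    have "((\<lambda>s. (norm ((f s - S u s) - (f t - S u t)) + \<alpha>j * norm (R u s - R u t)) / mA) \<longlongrightarrow>
          (norm ((f t - S u t) - (f t - S u t)) + \<alpha>j * norm (R u t - R u t)) / mA) (at t within I)"
    proof (rule tendsto_divide)
      show "((\<lambda>s. norm ((f s - S u s) - (f t - S u t)) + \<alpha>j * norm (R u s - R u t)) \<longlongrightarrow>
          norm ((f t - S u t) - (f t - S u t)) + \<alpha>j * norm (R u t - R u t)) (at t within I)"
        by (intro tendsto_add tendsto_norm tendsto_diff tendsto_const tendsto_mult f Su Ru)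
    qed (use mA_pos in auto)
    then have lim0: "((\<lambda>s. (norm ((f s - S u s) - (f t - S u t)) + \<alpha>j * norm (R u s - R u t)) / mA) \<longlongrightarrow> 0) (at t within I)"
      by simp
    have "((\<lambda>s. \<Lambda> u s - \<Lambda> u t) \<longlongrightarrow> 0) (at t within I)"
    proof (rule Lim_null_comparison[OF _ lim0])
      show "\<forall>\<^sub>F s in at t within I. norm (\<Lambda> u s - \<Lambda> u t) \<le> (norm ((f s - S u s) - (f t - S u t)) + \<alpha>j * norm (R u s - R u t)) / mA"
      proof (rule always_eventually, rule allI)
        fix s
        have "mA * norm (\<Lambda> u s - \<Lambda> u t) \<le> norm ((f s - S u s) - (f t - S u t)) + \<alpha>j * norm (R u s - R u t)"
          unfolding \<Lambda>_def by (rule sol_est)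
        then show "norm (\<Lambda> u s - \<Lambda> u t) \<le> (norm ((f s - S u s) - (f t - S u t)) + \<alpha>j * norm (R u s - R u t)) / mA"
          using mA_pos by (simp add: field_simps)
      qed
    qed
    then show "(\<Lambda> u \<longlongrightarrow> \<Lambda> u t) (at t within I)" by (rule LIM_zero_cancel)
  qed
  have loc: "\<exists>qq MM. 0 \<le> qq \<and> qq < 1 \<and> 0 \<le> MM \<and>
      (\<forall>u1 u2 t. continuous_on I u1 \<longrightarrow> continuous_on I u2 \<longrightarrow> t \<in> {0..T'} \<longrightarrow>
         norm (\<Lambda> u1 t - \<Lambda> u2 t) \<le> qq * norm (u1 t - u2 t) + MM * integral {0..t} (\<lambda>s. norm (u1 s - u2 s)))"
    if T': "T' \<in> I" for T'
  proof -
    obtain lR LR lS LS where pos: "lR > 0" "LR > 0" "lS > 0" "LS > 0"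
      and Rb: "\<forall>u1 u2 t. continuous_on I u1 \<longrightarrow> continuous_on I u2 \<longrightarrow> t \<in> {0..T'} \<longrightarrow>
             norm (R u1 t - R u2 t) \<le> lR * norm (u1 t - u2 t) + LR * integral {0..t} (\<lambda>s. norm (u1 s - u2 s))"
      and Sb: "\<forall>u1 u2 t. continuous_on I u1 \<longrightarrow> continuous_on I u2 \<longrightarrow> t \<in> {0..T'} \<longrightarrow>
             norm (S u1 t - S u2 t) \<le> lS * norm (u1 t - u2 t) + LS * integral {0..t} (\<lambda>s. norm (u1 s - u2 s))"
      and sm: "(\<alpha>j + 1) * (lR + lS) < mA"
      using RS_est[OF compact_Icc I_sub[OF T']] by blast
    define qq where "qq = (\<alpha>j * lR + lS) / mA"
    define MM where "MM = (\<alpha>j * LR + LS) / mA"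
    have qq0: "0 \<le> qq" unfolding qq_def using pos \<alpha>j_nonneg mA_pos by simp
    have "\<alpha>j * lR + lS \<le> (\<alpha>j + 1) * (lR + lS)" using pos \<alpha>j_nonneg by (simp add: algebra_simps)
    then have qq1: "qq < 1" unfolding qq_def using sm mA_pos by simp
    have MM0: "0 \<le> MM" unfolding MM_def using pos \<alpha>j_nonneg mA_pos by simp
    have "norm (\<Lambda> u1 t - \<Lambda> u2 t) \<le> qq * norm (u1 t - u2 t) + MM * integral {0..t} (\<lambda>s. norm (u1 s - u2 s))"
      if u1: "continuous_on I u1" and u2: "continuous_on I u2" and t: "t \<in> {0..T'}" for u1 u2 t
    proof -
      define n where "n = norm (u1 t - u2 t)"
      define i where "i = integral {0..t} (\<lambda>s. norm (u1 s - u2 s))"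
      have r: "norm (R u1 t - R u2 t) \<le> lR * n + LR * i" using Rb u1 u2 t unfolding n_def i_def by blast
      have s: "norm (S u1 t - S u2 t) \<le> lS * n + LS * i" using Sb u1 u2 t unfolding n_def i_def by blast
      have "norm (S u1 t - S u2 t) + \<alpha>j * norm (R u1 t - R u2 t) \<le> (lS * n + LS * i) + \<alpha>j * (lR * n + LR * i)"
        using r s \<alpha>j_nonneg by (intro add_mono mult_left_mono) auto
      then have "(norm (S u1 t - S u2 t) + \<alpha>j * norm (R u1 t - R u2 t)) / mA \<le> ((lS * n + LS * i) + \<alpha>j * (lR * n + LR * i)) / mA"
        using mA_pos by (simp add: divide_right_mono)
      also have "\<dots> = qq * n + MM * i" unfolding qq_def MM_def using mA_pos by (simp add: field_simps)
      finally show ?thesis using \<Lambda>_est[of u1 t u2] unfolding n_def i_def by linarith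
    qed
    then show ?thesis using qq0 qq1 MM0 by blast
  qed
  define U where "U n = (\<Lambda> ^^ n) (\<lambda>_. 0)" for n
  have U_Suc: "U (Suc n) = \<Lambda> (U n)" for n unfolding U_def by simp
  have U_cont: "continuous_on I (U n)" for n
  proof (induction n)
    case 0 then show ?case unfolding U_def by simp
  next
    case (Suc n) then show ?case unfolding U_Suc by (rule \<Lambda>_cont)
  qed
  have geo: "\<exists>\<theta> C. 0 \<le> \<theta> \<and> \<theta> < 1 \<and> 0 \<le> C \<and> (\<forall>n. \<forall>s\<in>{0..T'}. norm (U (Suc n) s - U n s) \<le> \<theta>^n * C)"
    if T': "T' \<in> I" for T'
  proof -
    obtain qq MM where qm: "0 \<le> qq" "qq < 1" "0 \<le> MM"
      and est: "\<forall>u1 u2 t. continuous_on I u1 \<longrightarrow> continuous_on I u2 \<longrightarrow> t \<in> {0..T'} \<longrightarrow>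
         norm (\<Lambda> u1 t - \<Lambda> u2 t) \<le> qq * norm (u1 t - u2 t) + MM * integral {0..t} (\<lambda>s. norm (u1 s - u2 s))"
      using loc[OF T'] by blast
    define d where "d n s = norm (U (Suc n) s - U n s)" for n s
    have dc: "continuous_on {0..T'} (d n)" for n
    proof -
      have "continuous_on {0..T'} (U m)" for m by (rule continuous_on_subset[OF U_cont I_sub[OF T']])
      then show ?thesis unfolding d_def by (intro continuous_intros) auto
    qed
    obtain x0 where x0: "x0 \<in> {0..T'}" "\<forall>y\<in>{0..T'}. d 0 y \<le> d 0 x0"
      using continuous_attains_sup[OF compact_Icc _ dc[of 0]] I_nonneg[OF T'] by auto
    define D where "D = d 0 x0"
    have D0: "0 \<le> D" unfolding D_def d_def by simp
    have d0: "d 0 s \<le> D" if "s \<in> {0..T'}" for s using x0 that unfolding D_def by blast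
    have rec: "d (Suc n) s \<le> qq * d n s + MM * integral {0..s} (d n)" if s: "s \<in> {0..T'}" for n s
    proof -
      have "norm (\<Lambda> (U (Suc n)) s - \<Lambda> (U n) s) \<le> qq * norm (U (Suc n) s - U n s) + MM * integral {0..s} (\<lambda>r. norm (U (Suc n) r - U n r))"
        using est U_cont s by blast
      moreover have "U (Suc (Suc n)) s = \<Lambda> (U (Suc n)) s" by (simp only: U_Suc[of "Suc n"])
      moreover have "U (Suc n) s = \<Lambda> (U n) s" by (simp only: U_Suc[of n])
      moreover have "d (Suc n) s = norm (U (Suc (Suc n)) s - U (Suc n) s)" unfolding d_def ..
      moreover have "d n = (\<lambda>r. norm (U (Suc n) r - U n r))" unfolding d_def ..
      ultimately show ?thesis by simp
    qed
    obtain \<theta> \<beta> where tb: "0 \<le> \<theta>" "\<theta> < 1" "0 < \<beta>" and bd: "\<forall>n. \<forall>s\<in>{0..T'}. d n s \<le> \<theta>^n * D * exp (\<beta> * s)"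
      using iter_bound[OF qm(1) qm(2) qm(3) D0 dc d0 rec] by blast
    have "norm (U (Suc n) s - U n s) \<le> \<theta>^n * (D * exp (\<beta> * T'))" if s: "s \<in> {0..T'}" for n s
    proof -
      have "d n s \<le> \<theta>^n * D * exp (\<beta> * s)" using bd s by blast
      also have "\<dots> \<le> \<theta>^n * D * exp (\<beta> * T')"
      proof (rule mult_left_mono)
        show "exp (\<beta> * s) \<le> exp (\<beta> * T')" using s tb by simp
        show "0 \<le> \<theta>^n * D" using tb D0 by simp
      qed
      finally show ?thesis unfolding d_def by simp
    qed
    moreover have "0 \<le> D * exp (\<beta> * T')" using D0 by simp
    ultimately show ?thesis using tb by blast
  qed
  define u where "u s = lim (\<lambda>n. U n s)" for s
  have ubound: "\<exists>\<theta> C. 0 \<le> \<theta> \<and> \<theta> < 1 \<and> 0 \<le> C \<and>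
      (\<forall>s\<in>{0..T'}. (\<lambda>n. U n s) \<longlonglongrightarrow> u s \<and> (\<forall>n. norm (u s - U n s) \<le> \<theta>^n * C / (1 - \<theta>)))"
    if T': "T' \<in> I" for T'
  proof -
    obtain \<theta> C where tc: "0 \<le> \<theta>" "\<theta> < 1" "0 \<le> C"
      and inc: "\<forall>n. \<forall>s\<in>{0..T'}. norm (U (Suc n) s - U n s) \<le> \<theta>^n * C"
      using geo[OF T'] by blast
    have "(\<lambda>n. U n s) \<longlonglongrightarrow> u s \<and> (\<forall>n. norm (u s - U n s) \<le> \<theta>^n * C / (1 - \<theta>))" if s: "s \<in> {0..T'}" for s
    proof -
      obtain l where l: "(\<lambda>n. U n s) \<longlonglongrightarrow> l" and lb: "\<forall>n. norm (l - U n s) \<le> \<theta>^n * C / (1 - \<theta>)"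
        using geo_conv[of "\<lambda>n. U n s" \<theta> C] inc s tc by blast
      have "u s = l" unfolding u_def using l by (rule limI)
      then show ?thesis using l lb by simp
    qed
    then show ?thesis using tc by blast
  qed
  have u_loc_cont: "continuous_on {0..T'} u" if T': "T' \<in> I" for T'
  proof -
    obtain \<theta> C where tc: "0 \<le> \<theta>" "\<theta> < 1" "0 \<le> C"
      and b: "\<forall>s\<in>{0..T'}. (\<lambda>n. U n s) \<longlonglongrightarrow> u s \<and> (\<forall>n. norm (u s - U n s) \<le> \<theta>^n * C / (1 - \<theta>))"
      using ubound[OF T'] by blast
    have z: "(\<lambda>n. \<theta>^n * C / (1 - \<theta>)) \<longlonglongrightarrow> 0"
      using tc by (intro tendsto_divide_zero tendsto_mult_left_zero LIMSEQ_power_zero) auto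
    have "uniform_limit {0..T'} U u sequentially"
    proof (rule uniform_limitI)
      fix e :: real assume e: "e > 0"
      have "\<forall>\<^sub>F n in sequentially. \<theta>^n * C / (1 - \<theta>) < e" by (rule order_tendstoD(2)[OF z e])
      then show "\<forall>\<^sub>F n in sequentially. \<forall>x\<in>{0..T'}. dist (U n x) (u x) < e"
      proof (rule eventually_mono)
        fix n assume n: "\<theta>^n * C / (1 - \<theta>) < e"
        show "\<forall>x\<in>{0..T'}. dist (U n x) (u x) < e"
        proof
          fix x assume "x \<in> {0..T'}"
          then have "norm (u x - U n x) \<le> \<theta>^n * C / (1 - \<theta>)" using b by blast
          then show "dist (U n x) (u x) < e" using n by (simp add: dist_norm norm_minus_commute)
        qed
      qed
    qed
    moreover have "\<forall>\<^sub>F n in sequentially. continuous_on {0..T'} (U n)"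
      using continuous_on_subset[OF U_cont I_sub[OF T']] by simp
    ultimately show ?thesis by (intro uniform_limit_theorem) auto
  qed
  have u_cont: "continuous_on I u" by (rule I_cont) (rule u_loc_cont)
  have u_fix: "\<Lambda> u t = u t" if t: "t \<in> I" for t
  proof -
    obtain qq MM where qm: "0 \<le> qq" "qq < 1" "0 \<le> MM"
      and est: "\<forall>u1 u2 s. continuous_on I u1 \<longrightarrow> continuous_on I u2 \<longrightarrow> s \<in> {0..t} \<longrightarrow>
         norm (\<Lambda> u1 s - \<Lambda> u2 s) \<le> qq * norm (u1 s - u2 s) + MM * integral {0..s} (\<lambda>r. norm (u1 r - u2 r))"
      using loc[OF t] by blast
    obtain \<theta> C where tc: "0 \<le> \<theta>" "\<theta> < 1" "0 \<le> C"
      and b: "\<forall>s\<in>{0..t}. (\<lambda>n. U n s) \<longlonglongrightarrow> u s \<and> (\<forall>n. norm (u s - U n s) \<le> \<theta>^n * C / (1 - \<theta>))"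
      using ubound[OF t] by blast
    have t0: "0 \<le> t" using I_nonneg[OF t] .
    have tt: "t \<in> {0..t}" using t0 by simp
    define e where "e n = \<theta>^n * C / (1 - \<theta>)" for n
    have z: "(\<lambda>n. (qq + MM * t) * e n) \<longlonglongrightarrow> 0"
      unfolding e_def using tc by (intro tendsto_mult_right_zero tendsto_divide_zero tendsto_mult_left_zero LIMSEQ_power_zero) auto
    have "norm (U (Suc n) t - \<Lambda> u t) \<le> (qq + MM * t) * e n" for n
    proof -
      have cn: "continuous_on {0..t} (\<lambda>s. norm (u s - U n s))"
      proof -
        have "continuous_on {0..t} (U n)" by (rule continuous_on_subset[OF U_cont I_sub[OF t]])
        then show ?thesis using u_loc_cont[OF t] by (intro continuous_intros) auto
      qed
      have "integral {0..t} (\<lambda>s. norm (u s - U n s)) \<le> integral {0..t} (\<lambda>s. e n)"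
      proof (rule integral_le)
        show "(\<lambda>s. norm (u s - U n s)) integrable_on {0..t}" by (rule integrable_continuous_interval[OF cn])
        show "(\<lambda>s. e n) integrable_on {0..t}" by (rule integrable_continuous_interval) (rule continuous_on_const)
        fix s assume "s \<in> {0..t}"
        then show "norm (u s - U n s) \<le> e n" using b unfolding e_def by blast
      qed
      also have "\<dots> = t * e n" using t0 by simp
      finally have ib: "integral {0..t} (\<lambda>s. norm (u s - U n s)) \<le> t * e n" .
      have "norm (U (Suc n) t - \<Lambda> u t) = norm (\<Lambda> u t - \<Lambda> (U n) t)" unfolding U_Suc by (simp add: norm_minus_commute)
      also have "\<dots> \<le> qq * norm (u t - U n t) + MM * integral {0..t} (\<lambda>s. norm (u s - U n s))"
        using est u_cont U_cont tt by blast
      also have "\<dots> \<le> qq * e n + MM * (t * e n)"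
        using b tt ib qm unfolding e_def by (intro add_mono mult_left_mono) auto
      also have "\<dots> = (qq + MM * t) * e n" by (simp add: algebra_simps)
      finally show ?thesis .
    qed
    then have ev: "\<forall>\<^sub>F n in sequentially. norm (U (Suc n) t - \<Lambda> u t) \<le> (qq + MM * t) * e n"
      by (intro always_eventually) blast
    have "(\<lambda>n. U (Suc n) t - \<Lambda> u t) \<longlonglongrightarrow> 0"
      by (rule Lim_null_comparison[OF ev z])
    then have l1: "(\<lambda>n. U (Suc n) t) \<longlonglongrightarrow> \<Lambda> u t" by (rule LIM_zero_cancel)
    have l2: "(\<lambda>n. U (Suc n) t) \<longlonglongrightarrow> u t" using b tt LIMSEQ_Suc by blast
    show ?thesis using LIMSEQ_unique[OF l1 l2] .
  qed
  have u_sol: "u t \<in> K \<and> - u t \<in> normal_cone (Cset_t K j f (R u t) t) (A (u t) + S u t)" if t: "t \<in> I" for t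
  proof -
    define p where "p = u t"
    define g where "g = f t - S u t"
    have pe: "p = sol (R u t) g" unfolding p_def g_def using u_fix[OF t] unfolding \<Lambda>_def by simp
    have pK: "p \<in> K" and vi: "\<forall>v\<in>K. 0 \<le> inner (A p - g) (v - p) + j (R u t) v - j (R u t) p"
      unfolding pe using sol by blast+
    define \<xi> where "\<xi> = g - A p"
    have vi': "\<forall>v\<in>K. inner \<xi> (v - p) \<le> j (R u t) v - j (R u t) p"
    proof
      fix v assume "v \<in> K"
      then have "0 \<le> inner (A p - g) (v - p) + j (R u t) v - j (R u t) p" using vi by blast
      moreover have "inner (A p - g) (v - p) = - inner \<xi> (v - p)" unfolding \<xi>_def by (simp add: inner_diff_left)
      ultimately show "inner \<xi> (v - p) \<le> j (R u t) v - j (R u t) p" by simp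
    qed
    note C = VI_to_C[where \<phi>="j (R u t)", OF K_cone K_convex K_ne jph j_convex pK vi']
    have "- p \<in> normal_cone (Cset_t K j f (R u t) t) (f t - \<xi>)" by (rule nc_from_VI[where j=j and \<eta>="R u t" and f=f and t=t, OF pK C])
    moreover have "f t - \<xi> = A (u t) + S u t" unfolding \<xi>_def g_def p_def by (simp add: algebra_simps)
    ultimately show ?thesis using pK unfolding p_def by simp
  qed
  have uniq: "w t = u t" if w: "continuous_on I w"
    and wnc: "\<forall>t\<in>I. - w t \<in> normal_cone (Cset_t K j f (R w t) t) (A (w t) + S w t)" and t: "t \<in> I" for w t
  proof -
    have wfix: "w s = \<Lambda> w s" if s: "s \<in> I" for s
    proof -
      obtain L where L: "\<forall>v\<in>K. \<forall>v'\<in>K. \<bar>j (R w s) v - j (R w s) v'\<bar> \<le> L * norm (v - v')" using j_lipL by blast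
      have "w s \<in> K \<and> (\<forall>v\<in>K. 0 \<le> inner ((A (w s) + S w s) - f s) (v - w s) + j (R w s) v - j (R w s) (w s))"
        using VI_from_nc[where j=j and \<eta>="R w s", OF K_cone K_convex K_ne K_closed jph j_convex L] wnc s by blast
      moreover have "(A (w s) + S w s) - f s = A (w s) - (f s - S w s)" by (simp add: algebra_simps)
      ultimately show ?thesis unfolding \<Lambda>_def by (intro sol_uniq) auto
    qed
    obtain qq MM where qm: "0 \<le> qq" "qq < 1" "0 \<le> MM"
      and est: "\<forall>u1 u2 s. continuous_on I u1 \<longrightarrow> continuous_on I u2 \<longrightarrow> s \<in> {0..t} \<longrightarrow>
         norm (\<Lambda> u1 s - \<Lambda> u2 s) \<le> qq * norm (u1 s - u2 s) + MM * integral {0..s} (\<lambda>r. norm (u1 r - u2 r))"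
      using loc[OF t] by blast
    define d where "d s = norm (w s - u s)" for s
    have dc: "continuous_on {0..t} d"
    proof -
      have "continuous_on {0..t} w" by (rule continuous_on_subset[OF w I_sub[OF t]])
      moreover have "continuous_on {0..t} u" by (rule continuous_on_subset[OF u_cont I_sub[OF t]])
      ultimately show ?thesis unfolding d_def by (intro continuous_intros) auto
    qed
    have t0: "0 \<le> t" using I_nonneg[OF t] .
    obtain x0 where x0: "x0 \<in> {0..t}" "\<forall>y\<in>{0..t}. d y \<le> d x0"
      using continuous_attains_sup[OF compact_Icc _ dc] t0 by auto
    define D where "D = d x0"
    have D0: "0 \<le> D" unfolding D_def d_def by simp
    have d0: "d s \<le> D" if "s \<in> {0..t}" for s using x0 that unfolding D_def by blast
    have rec: "d s \<le> qq * d s + MM * integral {0..s} d" if s: "s \<in> {0..t}" for s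
    proof -
      have sI: "s \<in> I" using I_sub[OF t] s by blast
      have "d s = norm (\<Lambda> w s - \<Lambda> u s)" unfolding d_def using wfix[OF sI] u_fix[OF sI] by simp
      also have "\<dots> \<le> qq * norm (w s - u s) + MM * integral {0..s} (\<lambda>r. norm (w r - u r))"
        using est w u_cont s by blast
      finally show ?thesis unfolding d_def .
    qed
    obtain \<theta> \<beta> where tb: "0 \<le> \<theta>" "\<theta> < 1" "0 < \<beta>" and bd: "\<forall>n. \<forall>s\<in>{0..t}. d s \<le> \<theta>^n * D * exp (\<beta> * s)"
      using iter_bound[OF qm(1) qm(2) qm(3) D0, of t "\<lambda>n. d", OF dc d0 rec] by blast
    have tt: "t \<in> {0..t}" using t0 by simp
    have z: "(\<lambda>n. \<theta>^n * D * exp (\<beta> * t)) \<longlonglongrightarrow> 0"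
      using tb by (intro tendsto_mult_left_zero LIMSEQ_power_zero) auto
    have "d t \<le> 0" using bd tt by (intro LIMSEQ_le_const[OF z]) auto
    then show ?thesis unfolding d_def by simp
  qed
  show ?thesis
    using u_cont u_sol uniq by blast
qed

end
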